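(* Let $S=(N,M_0)$ be a live H1S-WMG$_\le$ system with incidence matrix $I$. For any T-vector $Y\in\mathbb{N}^T$ and marking $M$ with $M_0+I\cdot Y=M$, there exist a marking $M'$ and a firing sequence $\sigma$ with $M_0[\sigma\rangle M'$ such that $\mathbf{P}(\sigma)\ge Y$ and $M[\sigma\ominus Y\rangle M'$. Consequently, the potential reachability graph of $S$ is initially directed (for every $M_1\in PR(S)$ there is a marking reachable both from $M_0$ and from $M_1$), $(N,M)$ is live for every such $M$, and thus $S$ is strongly live (every $M\in PR(S)$ yields a live system $(N,M)$).
   Context: A Petri net is $N=(P,T,W)$ with finite disjoint sets $P$, $T$ and weights $W:(P\times T)\cup(T\times P)\to\mathbb{N}$; incidence matrix $I(p,t)=W(t,p)-W(p,t)$; ${}^\bullet n=\{n':W(n',n)>0\}$, $n^\bullet=\{n':W(n,n')>0\}$. Transition $t$ is enabled at $M$ if $M(p)\ge W(p,t)$ for all $p$; firing yields $M+I[\cdot,t]$; $M[\sigma\rangle M'$ means the sequence $\sigma$ is feasible from $M$ and leads to $M'$. $\mathbf{P}(\sigma)$ is the Parikh vector of $\sigma$. $PR(S)=\{M\in\mathbb{N}^P:\exists Y\in\mathbb{N}^T, M=M_0+I\cdot Y\}$. A system is live if for every transition $t$ and every reachable marking $M'$ some marking reachable from $M'$ enables $t$. A place is shared if it has at least two output transitions. The net is homogeneous if for each place $p$ all weights $W(p,t)$, $t\in p^\bullet$, are equal. An H1S net is a homogeneous net with at most one shared place. It is H1S-WMG$_\le$ if, moreover, deleting the shared place (if any) together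 with its adjacent arcs (keeping all transitions) yields a WMG$_\le$, i.e. a net in which every place has at most one input and at most one output transition. Residue: for a sequence $\sigma$ and $Y\in\mathbb{N}^T$, $\sigma\ominus Y$ is obtained from $\sigma$ by removing, for each transition $t$, the $\min\{\mathbf{P}(\sigma)(t),Y(t)\}$ leftmost occurrences of $t$. *)

theory Defs
  imports Main
begin

text \<open>A Petri net N = (P,T,W): places are the (finite) type 'p, transitions the (finite)
  type 't; the weight function W on (P x T) u (T x P) is split into
  pre p t = W(p,t) and post t p = W(t,p).\<close>

type_synonym 'p marking = "'p \<Rightarrow> nat"

definition incidence :: "('p \<Rightarrow> 't \<Rightarrow> nat) \<Rightarrow> ('t \<Rightarrow> 'p \<Rightarrow> nat) \<Rightarrow> 'p \<Rightarrow> 't \<Rightarrow> int" where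
  "incidence pre post p t = int (post t p) - int (pre p t)"

definition preset_place :: "('t \<Rightarrow> 'p \<Rightarrow> nat) \<Rightarrow> 'p \<Rightarrow> 't set" where
  "preset_place post p = {t. post t p > 0}"

definition postset_place :: "('p \<Rightarrow> 't \<Rightarrow> nat) \<Rightarrow> 'p \<Rightarrow> 't set" where
  "postset_place pre p = {t. pre p t > 0}"

definition enabled :: "('p \<Rightarrow> 't \<Rightarrow> nat) \<Rightarrow> 'p marking \<Rightarrow> 't \<Rightarrow> bool" where
  "enabled pre M t \<longleftrightarrow> (\<forall>p. M p \<ge> pre p t)"

text \<open>marking after firing t (only meaningful when t is enabled)\<close>
definition fire :: "('p \<Rightarrow> 't \<Rightarrow> nat) \<Rightarrow> ('t \<Rightarrow> 'p \<Rightarrow> nat) \<Rightarrow> 'p marking \<Rightarrow> 't \<Rightarrow> 'p marking" where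
  "fire pre post M t = (\<lambda>p. M p - pre p t + post t p)"

text \<open>fires pre post M sigma M' : M[sigma> M'\<close>
fun fires :: "('p \<Rightarrow> 't \<Rightarrow> nat) \<Rightarrow> ('t \<Rightarrow> 'p \<Rightarrow> nat) \<Rightarrow> 'p marking \<Rightarrow> 't list \<Rightarrow> 'p marking \<Rightarrow> bool" where
  "fires pre post M [] M' \<longleftrightarrow> M' = M"
| "fires pre post M (t # \<sigma>) M' \<longleftrightarrow> enabled pre M t \<and> fires pre post (fire pre post M t) \<sigma> M'"

definition reachable :: "('p \<Rightarrow> 't \<Rightarrow> nat) \<Rightarrow> ('t \<Rightarrow> 'p \<Rightarrow> nat) \<Rightarrow> 'p marking \<Rightarrow> 'p marking \<Rightarrow> bool" where
  "reachable pre post M M' \<longleftrightarrow> (\<exists>\<sigma>. fires pre post M \<sigma> M')"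

definition parikh :: "'t list \<Rightarrow> 't \<Rightarrow> nat" where
  "parikh \<sigma> t = count_list \<sigma> t"

fun residue :: "'t list \<Rightarrow> ('t \<Rightarrow> nat) \<Rightarrow> 't list" where
  "residue [] Y = []"
| "residue (t # \<sigma>) Y = (if Y t > 0 then residue \<sigma> (Y(t := Y t - 1)) else t # residue \<sigma> Y)"

definition marking_eq :: "('p \<Rightarrow> 't::finite \<Rightarrow> nat) \<Rightarrow> ('t \<Rightarrow> 'p \<Rightarrow> nat) \<Rightarrow> 'p marking \<Rightarrow> ('t \<Rightarrow> nat) \<Rightarrow> 'p marking \<Rightarrow> bool" where
  "marking_eq pre post M0 Y M \<longleftrightarrow>
     (\<forall>p. int (M p) = int (M0 p) + (\<Sum>t\<in>UNIV. incidence pre post p t * int (Y t)))"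

definition PR :: "('p \<Rightarrow> 't::finite \<Rightarrow> nat) \<Rightarrow> ('t \<Rightarrow> 'p \<Rightarrow> nat) \<Rightarrow> 'p marking \<Rightarrow> 'p marking set" where
  "PR pre post M0 = {M. \<exists>Y::'t \<Rightarrow> nat. marking_eq pre post M0 Y M}"

definition live :: "('p \<Rightarrow> 't \<Rightarrow> nat) \<Rightarrow> ('t \<Rightarrow> 'p \<Rightarrow> nat) \<Rightarrow> 'p marking \<Rightarrow> bool" where
  "live pre post M0 \<longleftrightarrow>
     (\<forall>t M'. reachable pre post M0 M' \<longrightarrow> (\<exists>M''. reachable pre post M' M'' \<and> enabled pre M'' t))"

definition strongly_live :: "('p \<Rightarrow> 't::finite \<Rightarrow> nat) \<Rightarrow> ('t \<Rightarrow> 'p \<Rightarrow> nat) \<Rightarrow> 'p marking \<Rightarrow> bool" where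
  "strongly_live pre post M0 \<longleftrightarrow> (\<forall>M \<in> PR pre post M0. live pre post M)"

definition PR_initially_directed :: "('p \<Rightarrow> 't::finite \<Rightarrow> nat) \<Rightarrow> ('t \<Rightarrow> 'p \<Rightarrow> nat) \<Rightarrow> 'p marking \<Rightarrow> bool" where
  "PR_initially_directed pre post M0 \<longleftrightarrow>
     (\<forall>M1 \<in> PR pre post M0. \<exists>M. reachable pre post M0 M \<and> reachable pre post M1 M)"

definition shared :: "('p \<Rightarrow> 't \<Rightarrow> nat) \<Rightarrow> 'p \<Rightarrow> bool" where
  "shared pre p \<longleftrightarrow> card (postset_place pre p) \<ge> 2"

definition homogeneous :: "('p \<Rightarrow> 't \<Rightarrow> nat) \<Rightarrow> bool" where
  "homogeneous pre \<longleftrightarrow>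
     (\<forall>p t t'. t \<in> postset_place pre p \<longrightarrow> t' \<in> postset_place pre p \<longrightarrow> pre p t = pre p t')"

definition H1S :: "('p::finite \<Rightarrow> 't::finite \<Rightarrow> nat) \<Rightarrow> bool" where
  "H1S pre \<longleftrightarrow> homogeneous pre \<and> card {p. shared pre p} \<le> 1"

text \<open>H1S-WMG<=: additionally, every non-shared place has at most one input and at most
  one output transition (i.e. deleting the shared place, if any, yields a WMG<=).\<close>
definition H1S_WMG_le :: "('p::finite \<Rightarrow> 't::finite \<Rightarrow> nat) \<Rightarrow> ('t \<Rightarrow> 'p \<Rightarrow> nat) \<Rightarrow> bool" where
  "H1S_WMG_le pre post \<longleftrightarrow> H1S pre \<and>
     (\<forall>p. \<not> shared pre p \<longrightarrow> card (preset_place post p) \<le> 1 \<and> card (postset_place pre p) \<le> 1)"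

end

theory Submission
  imports Defs
begin

lemma fire_int:
  assumes "enabled pre M u"
  shows "int (fire pre post M u p) = int (M p) + incidence pre post p u"
proof -
  have "pre p u \<le> M p" using assms unfolding enabled_def by blast
  then show ?thesis unfolding fire_def incidence_def by (simp add: of_nat_diff)
qed

lemma sum_upd:
  fixes f :: "'t::finite \<Rightarrow> int"
  shows "(\<Sum>x\<in>UNIV. f x * int ((Z(t := Suc (Z t))) x)) = (\<Sum>x\<in>UNIV. f x * int (Z x)) + f t"
proof -
  have "(\<lambda>x. f x * int ((Z(t := Suc (Z t))) x)) = (\<lambda>x. f x * int (Z x) + (if x = t then f t else 0))"
    by (auto simp: fun_eq_iff algebra_simps)
  then show ?thesis by (simp only: sum.distrib) simp
qed

lemma marking_eq_fire:
  fixes pre :: "'p \<Rightarrow> 't::finite \<Rightarrow> nat"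
  assumes "marking_eq pre post M0 Y M" "enabled pre M u"
  shows "marking_eq pre post M0 (Y(u := Y u + 1)) (fire pre post M u)"
  using assms unfolding marking_eq_def by (simp del: fun_upd_apply add: fire_int sum_upd)

lemma marking_eq_dec:
  fixes pre :: "'p \<Rightarrow> 't::finite \<Rightarrow> nat"
  assumes "marking_eq pre post M0 Y M" "enabled pre M0 t" "Y t > 0"
  shows "marking_eq pre post (fire pre post M0 t) (Y(t := Y t - 1)) M"
proof -
  define Z where "Z = Y(t := Y t - 1)"
  have Y: "Y = Z(t := Z t + 1)" using assms(3) by (auto simp: Z_def fun_eq_iff)
  show ?thesis using assms(1) unfolding Z_def[symmetric] marking_eq_def
    by (subst (asm) Y) (simp del: fun_upd_apply add: sum_upd fire_int assms(2))
qed

lemma marking_eq_both: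
  fixes pre :: "'p \<Rightarrow> 't::finite \<Rightarrow> nat"
  assumes "marking_eq pre post M0 Y M" "enabled pre M0 u" "enabled pre M u"
  shows "marking_eq pre post (fire pre post M0 u) Y (fire pre post M u)"
  using assms unfolding marking_eq_def by (simp add: fire_int)

lemma marking_eq_zero:
  fixes pre :: "'p \<Rightarrow> 't::finite \<Rightarrow> nat"
  assumes "marking_eq pre post M0 Y M" "\<forall>t. Y t = 0"
  shows "M = M0"
  using assms unfolding marking_eq_def by (auto simp: fun_eq_iff)

lemma sum_dec:
  fixes Y :: "'t::finite \<Rightarrow> nat"
  assumes "Y t > 0"
  shows "sum (Y(t := Y t - 1)) UNIV < sum Y UNIV"
proof -
  have "sum Y UNIV = Y t + sum Y (UNIV - {t})" using sum.remove[of UNIV t Y] by simp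
  moreover have "sum (Y(t := Y t - 1)) UNIV = (Y t - 1) + sum (Y(t := Y t - 1)) (UNIV - {t})"
    using sum.remove[of UNIV t "Y(t := Y t - 1)"] by simp
  moreover have "sum (Y(t := Y t - 1)) (UNIV - {t}) = sum Y (UNIV - {t})"
    by (rule sum.cong) auto
  ultimately show ?thesis using assms by simp
qed

lemma fires_append:
  "fires pre post M (a @ b) M'' \<longleftrightarrow> (\<exists>M'. fires pre post M a M' \<and> fires pre post M' b M'')"
  by (induction a arbitrary: M) auto

lemma reachable_trans:
  "reachable pre post M1 M2 \<Longrightarrow> reachable pre post M2 M3 \<Longrightarrow> reachable pre post M1 M3"
  unfolding reachable_def using fires_append by metis

lemma reachable_step:
  "reachable pre post M1 M2 \<Longrightarrow> enabled pre M2 u \<Longrightarrow> reachable pre post M1 (fire pre post M2 u)"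
  using reachable_trans[of pre post M1 M2 "fire pre post M2 u"] unfolding reachable_def
  by (metis fires.simps)

lemma preserve_place:
  fixes Y :: "'t \<Rightarrow> nat"
  assumes "fires pre post M \<rho> M'" "\<forall>x\<in>set \<rho>. Y x = 0"
    "\<forall>x. pre q x > 0 \<longrightarrow> Y x > 0" "\<forall>x. post x q > 0 \<longrightarrow> Y x > 0"
  shows "M' q = M q"
  using assms
proof (induction \<rho> arbitrary: M)
  case Nil then show ?case by simp
next
  case (Cons u \<rho>)
  have "Y u = 0" using Cons.prems(2) by simp
  then have "pre q u = 0" using Cons.prems(3) by (metis less_irrefl neq0_conv)
  moreover have "post u q = 0" using Cons.prems(4) \<open>Y u = 0\<close> by (metis less_irrefl neq0_conv)
  ultimately have "fire pre post M u q = M q" by (simp add: fire_def)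
  with Cons show ?case by auto
qed

lemma first_R:
  fixes Y :: "'t \<Rightarrow> nat"
  assumes "fires pre post M \<rho>0 M1" "enabled pre M1 t" "Y t > 0"
  shows "\<exists>\<rho> M2 t'. fires pre post M \<rho> M2 \<and> (\<forall>x\<in>set \<rho>. Y x = 0) \<and> enabled pre M2 t' \<and> Y t' > 0"
  using assms
proof (induction \<rho>0 arbitrary: M)
  case Nil then show ?case by (intro exI[of _ "[]"]) auto
next
  case (Cons u \<rho>0)
  show ?case
  proof (cases "Y u > 0")
    case True then show ?thesis using Cons by (intro exI[of _ "[]"]) auto
  next
    case False
    have "fires pre post (fire pre post M u) \<rho>0 M1" using Cons.prems(1) by simp
    from Cons.IH[OF this Cons.prems(2,3)] obtain \<rho> M2 t' where "fires pre post (fire pre post M u) \<rho> M2" "\<forall>x\<in>set \<rho>. Y x = 0"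
      "enabled pre M2 t'" "Y t' > 0" by auto
    then show ?thesis using Cons.prems False by (intro exI[of _ "u # \<rho>"] exI[of _ M2] exI[of _ t']) auto
  qed
qed

lemma card_le1_unique:
  fixes A :: "'a::finite set"
  assumes "card A \<le> 1" "x \<in> A" "y \<in> A"
  shows "x = y"
  using assms card_le_Suc0_iff_eq[of A] by auto

lemma lemmaA:
  fixes pre :: "'p::finite \<Rightarrow> 't::finite \<Rightarrow> nat"
  assumes H: "H1S_WMG_le pre post"
    and me: "marking_eq pre post M0c Y Mc"
    and fr: "fires pre post M0c \<rho> M1" and rf: "\<forall>x\<in>set \<rho>. Y x = 0"
    and en1: "enabled pre M1 t'" and Yt': "Y t' > 0"
    and noR: "\<forall>t. Y t > 0 \<longrightarrow> \<not> enabled pre M0c t"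
    and enu: "enabled pre M0c u" and pu: "pre p u > 0"
  shows "\<not> shared pre p"
proof
  assume sp: "shared pre p"
  from noR Yt' have "\<not> enabled pre M0c t'" by blast
  then obtain q where q: "M0c q < pre q t'" unfolding enabled_def by (auto simp: not_le)
  have hom: "homogeneous pre" and c1: "card {p. shared pre p} \<le> 1"
    using H unfolding H1S_WMG_le_def H1S_def by auto
  have "q \<noteq> p"
  proof
    assume "q = p"
    then have "pre p t' > 0" "M0c p \<ge> pre p u" using q enu unfolding enabled_def by auto
    then have "pre p t' = pre p u" using hom pu unfolding homogeneous_def postset_place_def by blast
    then show False using q \<open>q = p\<close> \<open>M0c p \<ge> pre p u\<close> by simp
  qed
  then have nsq: "\<not> shared pre q" using c1 sp card_le1_unique[of "{p. shared pre p}" p q] by auto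
  then have cq: "card (postset_place pre q) \<le> 1" "card (preset_place post q) \<le> 1"
    using H unfolding H1S_WMG_le_def by auto
  have out: "\<forall>x. pre q x > 0 \<longrightarrow> x = t'"
  proof (intro allI impI)
    fix x assume "pre q x > 0"
    moreover have "pre q t' > 0" using q by simp
    ultimately show "x = t'" using card_le1_unique[OF cq(1)] unfolding postset_place_def by auto
  qed
  have inp: "\<forall>x. post x q > 0 \<longrightarrow> Y x > 0"
  proof (rule ccontr)
    assume "\<not> ?thesis"
    then obtain v where v: "post v q > 0" "Y v = 0" by auto
    have inv: "\<forall>x. post x q > 0 \<longrightarrow> x = v"
      using card_le1_unique[OF cq(2)] v unfolding preset_place_def by auto
    have trm: "\<And>x. incidence pre post q x * int (Y x) = (if x = t' then - int (pre q t') * int (Y t') else 0)"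
    proof -
      fix x
      have "post x q = 0 \<or> Y x = 0" using inv v by (metis neq0_conv)
      then have "int (post x q) * int (Y x) = 0" by auto
      moreover have "x \<noteq> t' \<Longrightarrow> pre q x = 0" using out by auto
      ultimately show "incidence pre post q x * int (Y x) = (if x = t' then - int (pre q t') * int (Y t') else 0)"
        unfolding incidence_def by (auto simp: algebra_simps)
    qed
    have "(\<Sum>x\<in>UNIV. incidence pre post q x * int (Y x)) = - int (pre q t') * int (Y t')"
      by (simp add: trm)
    with me have "int (Mc q) = int (M0c q) - int (pre q t') * int (Y t')"
      unfolding marking_eq_def by simp
    moreover have "pre q t' \<le> pre q t' * Y t'" using Yt' by simp
    then have "int (pre q t') * int (Y t') \<ge> int (pre q t')" by (metis of_nat_le_iff of_nat_mult)
    ultimately show False using q by simp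
  qed
  have "M1 q = M0c q"
    by (rule preserve_place[OF fr rf]) (use out Yt' inp in auto)
  then show False using en1 q unfolding enabled_def by (metis not_le)
qed

lemma lemmaB:
  fixes pre :: "'p::finite \<Rightarrow> 't::finite \<Rightarrow> nat"
  assumes H: "H1S_WMG_le pre post"
    and me: "marking_eq pre post M0c Y Mc"
    and enu: "enabled pre M0c u" and Yu: "Y u = 0"
    and ns: "\<forall>p. pre p u > 0 \<longrightarrow> \<not> shared pre p"
  shows "enabled pre Mc u"
  unfolding enabled_def
proof
  fix p
  show "Mc p \<ge> pre p u"
  proof (cases "pre p u > 0")
    case False then show ?thesis by simp
  next
    case True
    then have cp: "card (postset_place pre p) \<le> 1" using ns H unfolding H1S_WMG_le_def by auto
    have out: "\<forall>x. pre p x > 0 \<longrightarrow> x = u"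
      using card_le1_unique[OF cp] True unfolding postset_place_def by auto
    have "\<And>x. incidence pre post p x * int (Y x) \<ge> 0"
    proof -
      fix x
      show "incidence pre post p x * int (Y x) \<ge> 0"
      proof (cases "x = u")
        case True then show ?thesis using Yu by simp
      next
        case False then have "pre p x = 0" using out by auto
        then show ?thesis unfolding incidence_def by simp
      qed
    qed
    then have "(\<Sum>x\<in>UNIV. incidence pre post p x * int (Y x)) \<ge> 0" by (simp add: sum_nonneg)
    with me have "Mc p \<ge> M0c p" unfolding marking_eq_def by (metis le_add_same_cancel1 of_nat_le_iff)
    then show ?thesis using enu unfolding enabled_def by (meson order_trans)
  qed
qed

definition good where
  "good pre post M0c Y Mc \<longleftrightarrow> (\<exists>M' \<sigma>. fires pre post M0c \<sigma> M' \<and> (\<forall>t. Y t \<le> parikh \<sigma> t)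
                    \<and> fires pre post Mc (residue \<sigma> Y) M')"

lemma good_R:
  fixes pre :: "'p \<Rightarrow> 't::finite \<Rightarrow> nat"
  assumes "enabled pre M0c t" "Y t > 0" "good pre post (fire pre post M0c t) (Y(t := Y t - 1)) Mc"
  shows "good pre post M0c Y Mc"
proof -
  from assms(3) obtain M' \<sigma> where s: "fires pre post (fire pre post M0c t) \<sigma> M'"
    "\<forall>x. (Y(t := Y t - 1)) x \<le> parikh \<sigma> x" "fires pre post Mc (residue \<sigma> (Y(t := Y t - 1))) M'"
    unfolding good_def by blast
  have "\<forall>x. Y x \<le> parikh (t # \<sigma>) x"
  proof
    fix x show "Y x \<le> parikh (t # \<sigma>) x" using s(2)[rule_format, of x] unfolding parikh_def
      by (cases "x = t") auto
  qed
  then show ?thesis unfolding good_def using s assms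
    by (intro exI[of _ M'] exI[of _ "t # \<sigma>"]) auto
qed

lemma good_E:
  fixes pre :: "'p \<Rightarrow> 't::finite \<Rightarrow> nat"
  assumes "enabled pre M0c u" "enabled pre Mc u" "Y u = 0"
    "good pre post (fire pre post M0c u) Y (fire pre post Mc u)"
  shows "good pre post M0c Y Mc"
proof -
  from assms(4) obtain M' \<sigma> where s: "fires pre post (fire pre post M0c u) \<sigma> M'"
    "\<forall>x. Y x \<le> parikh \<sigma> x" "fires pre post (fire pre post Mc u) (residue \<sigma> Y) M'"
    unfolding good_def by blast
  have "\<forall>x. Y x \<le> parikh (u # \<sigma>) x"
  proof
    fix x show "Y x \<le> parikh (u # \<sigma>) x" using s(2)[rule_format, of x] unfolding parikh_def
      by (cases "x = u") auto
  qed
  then show ?thesis unfolding good_def using s assms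
    by (intro exI[of _ M'] exI[of _ "u # \<sigma>"]) auto
qed

lemma inner:
  fixes pre :: "'p::finite \<Rightarrow> 't::finite \<Rightarrow> nat"
  assumes H: "H1S_WMG_le pre post"
    and IH: "\<And>Y' M0c Mc. sum Y' UNIV < sum Y UNIV \<Longrightarrow> reachable pre post M0 M0c
               \<Longrightarrow> marking_eq pre post M0c Y' Mc \<Longrightarrow> good pre post M0c Y' Mc"
  shows "fires pre post M0c \<rho> M2 \<Longrightarrow> \<forall>x\<in>set \<rho>. Y x = 0 \<Longrightarrow> enabled pre M2 t' \<Longrightarrow> Y t' > 0
     \<Longrightarrow> reachable pre post M0 M0c \<Longrightarrow> marking_eq pre post M0c Y Mc \<Longrightarrow> good pre post M0c Y Mc"
proof (induction \<rho> arbitrary: M0c Mc)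
  case Nil
  then have "enabled pre M0c t'" by simp
  then show ?case
    using good_R[where Y=Y and t=t', OF _ Nil(4)] IH[OF sum_dec[where Y=Y and t=t', OF Nil(4)] reachable_step[OF Nil(5)] marking_eq_dec[where Y=Y and t=t', OF Nil(6) _ Nil(4)]]
    by blast
next
  case (Cons u \<rho>)
  show ?case
  proof (cases "\<exists>t. Y t > 0 \<and> enabled pre M0c t")
    case True
    then obtain t where t: "Y t > 0" "enabled pre M0c t" by blast
    show ?thesis
      using good_R[where Y=Y and t=t, OF t(2) t(1)] IH[OF sum_dec[where Y=Y and t=t, OF t(1)] reachable_step[OF Cons(6) t(2)] marking_eq_dec[where Y=Y and t=t, OF Cons(7) t(2) t(1)]]
      by blast
  next
    case False
    have enu: "enabled pre M0c u" and Yu: "Y u = 0" using Cons by auto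
    have ns: "\<forall>p. pre p u > 0 \<longrightarrow> \<not> shared pre p"
      using lemmaA[OF H Cons(7) Cons(2) Cons(3) Cons(4) Cons(5) _ enu] False by blast
    have enM: "enabled pre Mc u" by (rule lemmaB[OF H Cons(7) enu Yu ns])
    have "good pre post (fire pre post M0c u) Y (fire pre post Mc u)"
      by (rule Cons.IH) (use Cons reachable_step[OF Cons(6) enu] marking_eq_both[OF Cons(7) enu enM] in auto)
    then show ?thesis by (rule good_E[where Y=Y and u=u, OF enu enM Yu])
  qed
qed

lemma main_good:
  fixes pre :: "'p::finite \<Rightarrow> 't::finite \<Rightarrow> nat"
  assumes H: "H1S_WMG_le pre post" and L: "live pre post M0"
  shows "reachable pre post M0 M0c \<Longrightarrow> marking_eq pre post M0c Y Mc \<Longrightarrow> good pre post M0c Y Mc"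
proof (induction "sum Y UNIV" arbitrary: Y M0c Mc rule: less_induct)
  case less
  show ?case
  proof (cases "\<forall>t. Y t = 0")
    case True
    then have "Mc = M0c" using marking_eq_zero less by blast
    moreover have "residue [] Y = []" by simp
    ultimately show ?thesis unfolding good_def using True
      by (intro exI[of _ M0c] exI[of _ "[]"]) auto
  next
    case False
    then obtain t where t: "Y t > 0" by auto
    from L less(2) obtain M1 where "reachable pre post M0c M1" "enabled pre M1 t"
      unfolding live_def by blast
    then obtain \<rho>0 where r0: "fires pre post M0c \<rho>0 M1" and e1: "enabled pre M1 t" unfolding reachable_def by blast
    from first_R[where Y=Y and t=t, OF r0 e1 t] obtain \<rho> M2 t' where r: "fires pre post M0c \<rho> M2" "\<forall>x\<in>set \<rho>. Y x = 0"
      "enabled pre M2 t'" "Y t' > 0" by blast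
    show ?thesis
      by (rule inner[OF H _ r less(2) less(3)]) (use less in blast)
  qed
qed

lemma marking_eq_fires:
  fixes pre :: "'p \<Rightarrow> 't::finite \<Rightarrow> nat"
  shows "fires pre post M \<gamma> M'' \<Longrightarrow> marking_eq pre post M0 Y M \<Longrightarrow> \<exists>Y'. marking_eq pre post M0 Y' M''"
proof (induction \<gamma> arbitrary: M Y)
  case Nil then show ?case by auto
next
  case (Cons u \<gamma>)
  then show ?case using marking_eq_fire[of pre post M0 Y M u] by auto
qed

lemma reachable_refl: "reachable pre post M M"
  unfolding reachable_def by (intro exI[of _ "[]"]) simp

theorem mainTheorem5:
  fixes pre :: "'p::finite \<Rightarrow> 't::finite \<Rightarrow> nat"
    and post :: "'t \<Rightarrow> 'p \<Rightarrow> nat"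
    and M0 :: "'p \<Rightarrow> nat"
  assumes "H1S_WMG_le pre post"
    and "live pre post M0"
  shows "(\<forall>Y M. marking_eq pre post M0 Y M \<longrightarrow>
            (\<exists>M' \<sigma>. fires pre post M0 \<sigma> M' \<and> (\<forall>t. Y t \<le> parikh \<sigma> t)
                    \<and> fires pre post M (residue \<sigma> Y) M'))
       \<and> PR_initially_directed pre post M0
       \<and> (\<forall>Y M. marking_eq pre post M0 Y M \<longrightarrow> live pre post M)
       \<and> strongly_live pre post M0"
proof -
  have P1: "\<forall>Y M. marking_eq pre post M0 Y M \<longrightarrow>
            (\<exists>M' \<sigma>. fires pre post M0 \<sigma> M' \<and> (\<forall>t. Y t \<le> parikh \<sigma> t)
                    \<and> fires pre post M (residue \<sigma> Y) M')"
    using main_good[OF assms reachable_refl] unfolding good_def by blast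
  have dir: "\<And>Y M. marking_eq pre post M0 Y M \<Longrightarrow> \<exists>M'. reachable pre post M0 M' \<and> reachable pre post M M'"
    using P1 unfolding reachable_def by blast
  have P2: "PR_initially_directed pre post M0"
    unfolding PR_initially_directed_def PR_def using dir by blast
  have P3: "\<forall>Y M. marking_eq pre post M0 Y M \<longrightarrow> live pre post M"
  proof (intro allI impI)
    fix Y M assume me: "marking_eq pre post M0 Y M"
    show "live pre post M" unfolding live_def
    proof (intro allI impI)
      fix t M'' assume "reachable pre post M M''"
      then obtain \<gamma> where "fires pre post M \<gamma> M''" unfolding reachable_def by blast
      then obtain Y' where "marking_eq pre post M0 Y' M''" using marking_eq_fires me by blast
      then obtain M' where M': "reachable pre post M0 M'" "reachable pre post M'' M'" using dir by blast
      then obtain M''' where "reachable pre post M' M'''" "enabled pre M''' t"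
        using assms(2) unfolding live_def by blast
      then show "\<exists>M'''. reachable pre post M'' M''' \<and> enabled pre M''' t"
        using reachable_trans M'(2) by blast
    qed
  qed
  have P4: "strongly_live pre post M0"
    unfolding strongly_live_def PR_def using P3 by blast
  show ?thesis using P1 P2 P3 P4 by blast
qed

end
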